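(* Let $Q$ and $C$ be fixed probability measures on $(\mathcal{X},\mathcal{A})$ with disjoint supports, and for a sequence $\delta_N\in(0,1)$ let $P=P_N=(1-\delta_N)Q+\delta_NC$, so that $\lambda_N=\mathrm{TV}(P_N,Q)=\delta_N$. Consider the model of all such sequences $(\delta_N)_{N\ge1}$. Then for every $\varepsilon\in(0,1]$, $$\underline\gamma^{\hat\lambda_{\mathrm{bayes}}}(\varepsilon)=\underline\gamma^{\mathrm{oracle}}(\varepsilon)=-1.$$
   Context: Setting: for each $N$, $m=m_N,n=n_N$ are deterministic positive integers, $N=m+n$, $m\le n$, $m/N\to\pi\in(0,1)$; independent samples $X_1,\dots,X_m$ i.i.d. $\sim P_N$ and $Y_1,\dots,Y_n$ i.i.d. $\sim Q$; $\alpha\in(0,1)$ fixed; $f,g$ are densities of $P_N,Q$ w.r.t. a common dominating measure and $\rho^*(z)=g(z)/(f(z)+g(z))$. For $t\in[0,1]$: $F(t)=P_N(\rho^*(X)\le t)$, $G(t)=Q(\rho^*(Y)\le t)$, $\hat F_m,\hat G_n$ the corresponding empirical distribution functions of $\rho^*(X_i)$ and $\rho^*(Y_j)$, $\sigma(t)=\sqrt{F(t)(1-F(t))/m+G(t)(1-G(t))/n}$, and $\hat\lambda^{\rho^*}(t)=\hat F_m(t)-\hat G_n(t)-q_{1-\alpha}\sigma(t)$ ($q_{1-\alpha}$ the standard normal quantile). The estimator $\hat\lambda_{\mathrm{bayes}}=\hat A_0+\hat A_1-1-q_{1-\alpha}\hat\sigma$ with $\hat A_0=\frac1m\sum_i\mathbf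 1\{\rho^*(X_i)\le1/2\}$, $\hat A_1=\frac1n\sum_j\mathbf 1\{\rho^*(Y_j)>1/2\}$, $\hat\sigma=\sqrt{\hat A_0(1-\hat A_0)/m+\hat A_1(1-\hat A_1)/n}$. $h_1\asymp h_2$ means both ratios have finite limsup. For an estimator $\hat\lambda$ and $\varepsilon\in(0,1]$, $\underline\gamma^{\hat\lambda}(\varepsilon)$ is the infimum of all $\gamma_0\in[-1,0)$ such that for every $\gamma\in(\gamma_0,0)$ and every sequence in the model with $\lambda_N\asymp N^\gamma$, $\mathbb{P}(\hat\lambda>(1-\varepsilon)\lambda_N)\to1$. $\underline\gamma^{\mathrm{oracle}}(\varepsilon)$ is the infimum of all $\gamma_0\in[-1,0)$ such that for every $\gamma\in(\gamma_0,0)$ and every sequence in the model with $\lambda_N\asymp N^\gamma$ there is a deterministic $(t_N)\subset[0,1]$ with $\mathbb{P}(\hat\lambda^{\rho^*}(t_N)>(1-\varepsilon)\lambda_N)\to1$. *)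

theory Defs
  imports "HOL-Probability.Probability" "HOL-Library.Landau_Symbols"
begin

definition std_normal_cdf :: "real \<Rightarrow> real" where
  "std_normal_cdf x = measure (density lborel std_normal_density) {..x}"

definition std_normal_quantile :: "real \<Rightarrow> real" where
  "std_normal_quantile p = (THE x. std_normal_cdf x = p)"

definition mixture :: "real \<Rightarrow> 'a measure \<Rightarrow> 'a measure \<Rightarrow> 'a measure" where
  "mixture d Q C = measure_of (space Q) (sets Q)
     (\<lambda>A. ennreal (1 - d) * emeasure Q A + ennreal d * emeasure C A)"

definition disjoint_supports :: "'a measure \<Rightarrow> 'a measure \<Rightarrow> bool" where
  "disjoint_supports Q C \<longleftrightarrow> (\<exists>A\<in>sets Q. emeasure Q A = 1 \<and> emeasure C A = 0)"

definition rho_star :: "('a \<Rightarrow> real) \<Rightarrow> ('a \<Rightarrow> real) \<Rightarrow> 'a \<Rightarrow> real" where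
  "rho_star f g z = g z / (f z + g z)"

definition densities :: "'a measure \<Rightarrow> 'a measure \<Rightarrow> 'a measure
    \<Rightarrow> ('a \<Rightarrow> real) \<Rightarrow> ('a \<Rightarrow> real) \<Rightarrow> bool" where
  "densities P Q mu f g \<longleftrightarrow> sets mu = sets Q \<and>
     f \<in> borel_measurable mu \<and> g \<in> borel_measurable mu \<and>
     (\<forall>x. 0 \<le> f x) \<and> (\<forall>x. 0 \<le> g x) \<and>
     density mu (\<lambda>x. ennreal (f x)) = P \<and> density mu (\<lambda>x. ennreal (g x)) = Q"

definition sample_space :: "nat \<Rightarrow> nat \<Rightarrow> 'a measure \<Rightarrow> 'a measure
    \<Rightarrow> ((nat \<Rightarrow> 'a) \<times> (nat \<Rightarrow> 'a)) measure" where
  "sample_space m n P Q = (PiM {..<m} (\<lambda>_. P)) \<Otimes>\<^sub>M (PiM {..<n} (\<lambda>_. Q))"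

definition emp_cdf :: "nat \<Rightarrow> ('a \<Rightarrow> real) \<Rightarrow> (nat \<Rightarrow> 'a) \<Rightarrow> real \<Rightarrow> real" where
  "emp_cdf k rho zs t = real (card {i\<in>{..<k}. rho (zs i) \<le> t}) / real k"

definition lambda_bayes :: "real \<Rightarrow> nat \<Rightarrow> nat \<Rightarrow> ('a \<Rightarrow> real)
    \<Rightarrow> (nat \<Rightarrow> 'a) \<times> (nat \<Rightarrow> 'a) \<Rightarrow> real" where
  "lambda_bayes \<alpha> m n rho \<omega> =
     (let A0 = real (card {i\<in>{..<m}. rho (fst \<omega> i) \<le> 1/2}) / real m;
          A1 = real (card {j\<in>{..<n}. rho (snd \<omega> j) > 1/2}) / real n;
          s = sqrt (A0 * (1 - A0) / real m + A1 * (1 - A1) / real n)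
      in A0 + A1 - 1 - std_normal_quantile (1 - \<alpha>) * s)"

definition lambda_oracle :: "real \<Rightarrow> nat \<Rightarrow> nat \<Rightarrow> 'a measure \<Rightarrow> 'a measure
    \<Rightarrow> ('a \<Rightarrow> real) \<Rightarrow> real \<Rightarrow> (nat \<Rightarrow> 'a) \<times> (nat \<Rightarrow> 'a) \<Rightarrow> real" where
  "lambda_oracle \<alpha> m n P Q rho t \<omega> =
     (let F = measure P {x\<in>space P. rho x \<le> t};
          G = measure Q {y\<in>space Q. rho y \<le> t};
          s = sqrt (F * (1 - F) / real m + G * (1 - G) / real n)
      in emp_cdf m rho (fst \<omega>) t - emp_cdf n rho (snd \<omega>) t
         - std_normal_quantile (1 - \<alpha>) * s)"

definition model_seq :: "real \<Rightarrow> (nat \<Rightarrow> real) \<Rightarrow> bool" where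
  "model_seq \<gamma> \<delta> \<longleftrightarrow> (\<forall>N. 0 < \<delta> N \<and> \<delta> N < 1) \<and>
     \<delta> \<in> \<Theta>(\<lambda>N. real N powr \<gamma>)"

definition bayes_good :: "real \<Rightarrow> (nat \<Rightarrow> nat) \<Rightarrow> (nat \<Rightarrow> nat) \<Rightarrow> 'a measure
    \<Rightarrow> 'a measure \<Rightarrow> real \<Rightarrow> real \<Rightarrow> bool" where
  "bayes_good \<alpha> m n Q C \<epsilon> \<gamma> \<longleftrightarrow>
     (\<forall>\<delta> mu f g. model_seq \<gamma> \<delta> \<longrightarrow>
        (\<forall>N. densities (mixture (\<delta> N) Q C) Q (mu N) (f N) (g N)) \<longrightarrow>
        (\<lambda>N. let S = sample_space (m N) (n N) (mixture (\<delta> N) Q C) Q in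
           measure S {\<omega>\<in>space S. lambda_bayes \<alpha> (m N) (n N) (rho_star (f N) (g N)) \<omega>
                                   > (1 - \<epsilon>) * \<delta> N}) \<longlonglongrightarrow> 1)"

definition oracle_good :: "real \<Rightarrow> (nat \<Rightarrow> nat) \<Rightarrow> (nat \<Rightarrow> nat) \<Rightarrow> 'a measure
    \<Rightarrow> 'a measure \<Rightarrow> real \<Rightarrow> real \<Rightarrow> bool" where
  "oracle_good \<alpha> m n Q C \<epsilon> \<gamma> \<longleftrightarrow>
     (\<forall>\<delta> mu f g. model_seq \<gamma> \<delta> \<longrightarrow>
        (\<forall>N. densities (mixture (\<delta> N) Q C) Q (mu N) (f N) (g N)) \<longrightarrow>
        (\<exists>t::nat \<Rightarrow> real. (\<forall>N. 0 \<le> t N \<and> t N \<le> 1) \<and>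
          (\<lambda>N. let S = sample_space (m N) (n N) (mixture (\<delta> N) Q C) Q in
             measure S {\<omega>\<in>space S.
               lambda_oracle \<alpha> (m N) (n N) (mixture (\<delta> N) Q C) Q
                 (rho_star (f N) (g N)) (t N) \<omega> > (1 - \<epsilon>) * \<delta> N}) \<longlonglongrightarrow> 1))"

definition gamma_lower :: "(real \<Rightarrow> bool) \<Rightarrow> real" where
  "gamma_lower good = Inf {\<gamma>0. -1 \<le> \<gamma>0 \<and> \<gamma>0 < 0 \<and> (\<forall>\<gamma>. \<gamma>0 < \<gamma> \<and> \<gamma> < 0 \<longrightarrow> good \<gamma>)}"

end

theory Submission
  imports Defs "HOL-Real_Asymp.Real_Asymp"
begin

lemma mixture_emeasure:
  assumes Q: "prob_space Q" and C: "prob_space C" and sC: "sets C = sets Q"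
    and d: "0 \<le> d" "d \<le> 1" and B: "B \<in> sets Q"
  shows "emeasure (mixture d Q C) B = ennreal (1 - d) * emeasure Q B + ennreal d * emeasure C B"
  unfolding mixture_def
proof (rule emeasure_measure_of_sigma)
  show "sigma_algebra (space Q) (sets Q)" by (rule sets.sigma_algebra_axioms)
  show "positive (sets Q) (\<lambda>A. ennreal (1 - d) * emeasure Q A + ennreal d * emeasure C A)"
    by (simp add: positive_def)
  show "countably_additive (sets Q) (\<lambda>A. ennreal (1 - d) * emeasure Q A + ennreal d * emeasure C A)"
    unfolding countably_additive_def
  proof (intro allI impI)
    fix A :: "nat \<Rightarrow> _" assume h1: "range A \<subseteq> sets Q" and h2: "disjoint_family A" and h3: "\<Union> (range A) \<in> sets Q"
    note h = h1 h2 h3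
    have hC: "range A \<subseteq> sets C" using h1 sC by simp
    have "(\<Sum>i. ennreal (1 - d) * emeasure Q (A i) + ennreal d * emeasure C (A i))
        = (\<Sum>i. ennreal (1 - d) * emeasure Q (A i)) + (\<Sum>i. ennreal d * emeasure C (A i))"
      by (rule suminf_add[symmetric]) auto
    also have "\<dots> = ennreal (1 - d) * (\<Sum>i. emeasure Q (A i)) + ennreal d * (\<Sum>i. emeasure C (A i))"
      by simp
    also have "\<dots> = ennreal (1 - d) * emeasure Q (\<Union>i. A i) + ennreal d * emeasure C (\<Union>i. A i)"
      using h hC by (simp add: suminf_emeasure)
    finally show "(\<Sum>i. ennreal (1 - d) * emeasure Q (A i) + ennreal d * emeasure C (A i))
        = ennreal (1 - d) * emeasure Q (\<Union> (range A)) + ennreal d * emeasure C (\<Union> (range A))" .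
  qed
qed (rule B)

lemma mixture_sets: "sets (mixture d Q C) = sets Q" and mixture_space: "space (mixture d Q C) = space Q"
  unfolding mixture_def by (simp_all add: sets.space_closed)

lemma mixture_measure:
  assumes Q: "prob_space Q" and C: "prob_space C" and sC: "sets C = sets Q"
    and d: "0 \<le> d" "d \<le> 1" and B: "B \<in> sets Q"
  shows "measure (mixture d Q C) B = (1 - d) * measure Q B + d * measure C B"
proof -
  interpret Q: prob_space Q by fact
  interpret C: prob_space C by fact
  have "emeasure (mixture d Q C) B = ennreal ((1 - d) * measure Q B + d * measure C B)"
    using mixture_emeasure[OF assms] d B sC
    by (simp add: Q.emeasure_eq_measure C.emeasure_eq_measure ennreal_plus[symmetric]
          ennreal_mult[symmetric] mult_nonneg_nonneg del: ennreal_plus)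
  moreover have "0 \<le> (1 - d) * measure Q B + d * measure C B" using d by simp
  ultimately show ?thesis unfolding measure_def by (simp del: ennreal_plus)
qed

lemma mixture_prob:
  assumes Q: "prob_space Q" and C: "prob_space C" and sC: "sets C = sets Q"
    and d: "0 \<le> d" "d \<le> 1"
  shows "prob_space (mixture d Q C)"
proof
  interpret Q: prob_space Q by fact
  interpret C: prob_space C by fact
  show "emeasure (mixture d Q C) (space (mixture d Q C)) = 1"
    using mixture_emeasure[OF assms, of "space Q"] sC
    by (simp add: mixture_space C.emeasure_space_1[unfolded sets_eq_imp_space_eq[OF sC]]
        Q.emeasure_space_1) (use d in \<open>simp flip: ennreal_plus\<close>)
qed

lemma rho_le_half: assumes "0 \<le> f" "0 \<le> g" "g / (f + g) \<le> 1/2" shows "g \<le> (f::real)"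
proof (cases "f + g = 0")
  case True then show ?thesis using assms by simp
next
  case False then have "f + g > 0" using assms by simp
  then show ?thesis using assms(3) by (simp add: divide_le_eq)
qed

lemma rho_gt_half: assumes "0 \<le> f" "0 \<le> g" "g / (f + g) > 1/2" shows "f \<le> (g::real)"
proof (cases "f + g = 0")
  case True then show ?thesis using assms by simp
next
  case False then have "f + g > 0" using assms by simp
  then show ?thesis using assms(3) by (simp add: less_divide_eq)
qed

lemma rho_facts:
  assumes Q: "prob_space Q" and C: "prob_space C" and sC: "sets C = sets Q"
    and dis: "disjoint_supports Q C" and d: "0 < d" "d < 1"
    and den: "densities (mixture d Q C) Q mu f g"
  shows "rho_star f g \<in> borel_measurable Q"
    and "measure Q {x\<in>space Q. rho_star f g x \<le> 1/2} = 0"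
    and "measure (mixture d Q C) {x\<in>space Q. rho_star f g x \<le> 1/2} = d"
proof -
  interpret Q: prob_space Q by fact
  interpret C: prob_space C by fact
  define P where "P = mixture d Q C"
  have P: "prob_space P" unfolding P_def using mixture_prob[OF Q C sC] d by simp
  interpret P: prob_space P by fact
  have sP: "sets P = sets Q" and spP: "space P = space Q"
    unfolding P_def by (simp_all add: mixture_sets mixture_space)
  have smu: "sets mu = sets Q" and fm: "f \<in> borel_measurable mu" and gm: "g \<in> borel_measurable mu"
    and f0: "\<And>x. 0 \<le> f x" and g0: "\<And>x. 0 \<le> g x"
    and Pd: "density mu (\<lambda>x. ennreal (f x)) = P" and Qd: "density mu (\<lambda>x. ennreal (g x)) = Q"
    using den unfolding densities_def P_def by auto
  have gme: "(\<lambda>x. ennreal (g x)) \<in> borel_measurable mu" using gm by measurable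
  have fme: "(\<lambda>x. ennreal (f x)) \<in> borel_measurable mu" using fm by measurable
  have spmu: "space mu = space Q" using smu by (rule sets_eq_imp_space_eq)
  have rm: "rho_star f g \<in> borel_measurable mu" unfolding rho_star_def using fm gm by measurable
  then show rQ: "rho_star f g \<in> borel_measurable Q" using measurable_cong_sets[OF smu refl] by blast
  obtain A where A: "A \<in> sets Q" "emeasure Q A = 1" "emeasure C A = 0"
    using dis unfolding disjoint_supports_def by blast
  have QA: "measure Q A = 1" and CA: "measure C A = 0"
    using A by (simp_all add: Q.emeasure_eq_measure C.emeasure_eq_measure)
  have QnA: "measure Q (space Q - A) = 0" using Q.prob_compl[OF A(1)] QA by simp
  have Pmix: "measure P B = (1 - d) * measure Q B + d * measure C B" if "B \<in> sets Q" for B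
    unfolding P_def using mixture_measure[OF Q C sC _ _ that] d by simp
  have dens: "emeasure Q B \<le> emeasure P B" if "B \<in> sets Q" "\<And>x. x \<in> B \<Longrightarrow> g x \<le> f x" for B
  proof -
    have "emeasure Q B = (\<integral>\<^sup>+ x. ennreal (g x) * indicator B x \<partial>mu)"
      using that(1) smu by (subst Qd[symmetric]) (simp add: emeasure_density gme fme)
    also have "\<dots> \<le> (\<integral>\<^sup>+ x. ennreal (f x) * indicator B x \<partial>mu)"
      by (intro nn_integral_mono) (auto simp: indicator_def that(2) intro: ennreal_leI)
    also have "\<dots> = emeasure P B"
      using that(1) smu by (subst Pd[symmetric]) (simp add: emeasure_density gme fme)
    finally show ?thesis .
  qed
  have dens': "emeasure P B \<le> emeasure Q B" if "B \<in> sets Q" "\<And>x. x \<in> B \<Longrightarrow> f x \<le> g x" for B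
  proof -
    have "emeasure P B = (\<integral>\<^sup>+ x. ennreal (f x) * indicator B x \<partial>mu)"
      using that(1) smu by (subst Pd[symmetric]) (simp add: emeasure_density gme fme)
    also have "\<dots> \<le> (\<integral>\<^sup>+ x. ennreal (g x) * indicator B x \<partial>mu)"
      by (intro nn_integral_mono) (auto simp: indicator_def that(2) intro: ennreal_leI)
    also have "\<dots> = emeasure Q B"
      using that(1) smu by (subst Qd[symmetric]) (simp add: emeasure_density gme fme)
    finally show ?thesis .
  qed
  define L where "L = {x\<in>space Q. rho_star f g x \<le> 1/2}"
  have L: "L \<in> sets Q" unfolding L_def using rQ by measurable
  define B where "B = L \<inter> A"
  have B: "B \<in> sets Q" unfolding B_def using L A by auto
  have "emeasure Q B \<le> emeasure P B"
    by (rule dens[OF B]) (rule rho_le_half[OF f0 g0], simp add: B_def L_def rho_star_def)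
  then have "measure Q B \<le> measure P B"
    using B sP by (simp add: Q.emeasure_eq_measure P.emeasure_eq_measure)
  moreover have "measure C B = 0"
    using C.finite_measure_mono[of B A] A(1) sC CA by (simp add: B_def measure_nonneg order_antisym)
  ultimately have "measure Q B \<le> (1 - d) * measure Q B" using Pmix[OF B] by simp
  then have QB: "measure Q B = 0" using d measure_nonneg[of Q B]
  proof -
    have "d * measure Q B \<le> 0" using \<open>measure Q B \<le> (1 - d) * measure Q B\<close> by (simp add: algebra_simps)
    then show ?thesis using d measure_nonneg[of Q B] by (simp add: mult_le_0_iff)
  qed
  have "L \<subseteq> B \<union> (space Q - A)" unfolding B_def L_def by auto
  then have "measure Q L \<le> measure Q B + measure Q (space Q - A)"
  proof -
    have "measure Q L \<le> measure Q (B \<union> (space Q - A))"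
      using \<open>L \<subseteq> _\<close> B A by (intro Q.finite_measure_mono) auto
    also have "\<dots> \<le> measure Q B + measure Q (space Q - A)"
      using B A by (intro measure_subadditive) (auto simp: Q.emeasure_eq_measure)
    finally show ?thesis .
  qed
  then show QL: "measure Q {x\<in>space Q. rho_star f g x \<le> 1/2} = 0"
    using QB QnA measure_nonneg[of Q L] unfolding L_def by linarith
  define D where "D = (space Q - L) - A"
  have D: "D \<in> sets Q" unfolding D_def using L A by auto
  have "emeasure P D \<le> emeasure Q D"
    by (rule dens'[OF D]) (rule rho_gt_half[OF f0 g0], auto simp: D_def L_def rho_star_def not_le)
  then have "measure P D \<le> measure Q D"
    using D sP by (simp add: Q.emeasure_eq_measure P.emeasure_eq_measure)
  moreover have "measure Q D = 0"
    using Q.finite_measure_mono[of D "space Q - A"] A(1) QnA by (simp add: D_def measure_nonneg order_antisym Diff_mono)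
  ultimately have "d * measure C D \<le> 0" using Pmix[OF D] by simp
  then have CD: "measure C D = 0" using d measure_nonneg[of C D]
    by (simp add: mult_le_0_iff)
  have "space Q - L \<subseteq> D \<union> A" unfolding D_def by auto
  then have "measure C (space Q - L) \<le> measure C D + measure C A"
    using measure_subadditive[of D C A] C.finite_measure_mono[of "space Q - L" "D \<union> A"] D A sC
    by auto
  then have "measure C (space Q - L) = 0" using CD CA measure_nonneg[of C "space Q - L"] by linarith
  then have CL: "measure C L = 1"
    using C.prob_compl[of L] L sC sets_eq_imp_space_eq[OF sC] by simp
  show "measure (mixture d Q C) {x\<in>space Q. rho_star f g x \<le> 1/2} = d"
    using Pmix[OF L] CL QL unfolding P_def L_def by simp
qed

lemma card_as_sum: "real (card {i\<in>{..<m::nat}. Pr i}) = (\<Sum>i<m. if Pr i then 1 else 0)"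
proof -
  have "(\<Sum>i<m. if Pr i then (1::real) else 0) = (\<Sum>i\<in>{i\<in>{..<m}. Pr i}. 1)"
    by (subst sum.inter_filter) auto
  then show ?thesis by simp
qed

lemma chernoff_prod:
  fixes rho :: "'a \<Rightarrow> real"
  assumes P: "prob_space P" and rm: "rho \<in> borel_measurable P"
    and p: "measure P {x\<in>space P. rho x \<le> 1/2} = p" and s: "s > 0"
  shows "measure (PiM {..<m} (\<lambda>_. P))
     {x\<in>space (PiM {..<m} (\<lambda>_. P)). real (card {i\<in>{..<m}. rho (x i) \<le> 1/2}) \<le> a}
     \<le> exp (s * a - real m * p * (1 - exp (- s)))"
proof -
  interpret P: prob_space P by fact
  interpret PS: product_prob_space "\<lambda>_. P" by (rule product_prob_spaceI) (rule P)
  define X where "X = PiM {..<m} (\<lambda>_. P)"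
  have X: "prob_space X" unfolding X_def by (rule prob_space_PiM) (rule P)
  interpret X: prob_space X by fact
  define I where "I = (\<lambda>z. if rho z \<le> 1/2 then 1 else (0::real))"
  have Im: "I \<in> borel_measurable P" unfolding I_def using rm by measurable
  define K where "K = (\<lambda>x. \<Sum>i<m. I (x i))"
  have Km: "K \<in> borel_measurable X" unfolding K_def X_def using Im by measurable
  have Keq: "real (card {i\<in>{..<m}. rho (x i) \<le> 1/2}) = K x" for x
    unfolding K_def I_def by (rule card_as_sum)
  define L where "L = {x\<in>space P. rho x \<le> 1/2}"
  have L: "L \<in> sets P" unfolding L_def using rm by measurable
  have p01: "0 \<le> p" "p \<le> 1" using p by auto
  have "emeasure X {x\<in>space X. K x \<le> a}
     \<le> ennreal (exp (s * a)) * (\<integral>\<^sup>+ x. ennreal (exp (- s * K x)) * indicator (space X) x \<partial>X)"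
    by (rule Chernoff_ineq_nn_integral_le[OF s _ Km]) simp
  also have "(\<integral>\<^sup>+ x. ennreal (exp (- s * K x)) * indicator (space X) x \<partial>X)
      = (\<integral>\<^sup>+ x. (\<Prod>i\<in>{..<m}. ennreal (exp (- s * I (x i)))) \<partial>X)"
    by (intro nn_integral_cong)
       (simp add: K_def sum_distrib_left exp_sum prod_ennreal)
  also have "\<dots> = (\<Prod>i\<in>{..<m}. (\<integral>\<^sup>+ z. ennreal (exp (- s * I z)) \<partial>P))"
    unfolding X_def using Im by (intro PS.product_nn_integral_prod) auto
  also have "(\<integral>\<^sup>+ z. ennreal (exp (- s * I z)) \<partial>P) = ennreal (1 - p * (1 - exp (- s)))"
  proof -
    have "(\<integral>\<^sup>+ z. ennreal (exp (- s * I z)) \<partial>P)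
        = (\<integral>\<^sup>+ z. ennreal (exp (- s)) * indicator L z + indicator (space P - L) z \<partial>P)"
      by (intro nn_integral_cong) (auto simp: I_def L_def indicator_def)
    also have "\<dots> = ennreal (exp (- s)) * emeasure P L + emeasure P (space P - L)"
      using L by (subst nn_integral_add) (auto simp: nn_integral_cmult_indicator)
    also have "\<dots> = ennreal (exp (- s) * p + (1 - p))"
    proof -
      have e1: "ennreal (exp (- s)) * ennreal p = ennreal (exp (- s) * p)"
        using p01 by (simp add: ennreal_mult)
      have e2: "ennreal (exp (- s) * p + (1 - p)) = ennreal (exp (- s) * p) + ennreal (1 - p)"
        using p01 by (intro ennreal_plus) auto
      show ?thesis using L p P.prob_compl[OF L]
        by (simp only: P.emeasure_eq_measure e2 L_def[symmetric] e1)
    qed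
    finally show ?thesis by (simp add: algebra_simps)
  qed
  also have "(\<Prod>i\<in>{..<m}. ennreal (1 - p * (1 - exp (- s)))) = ennreal ((1 - p * (1 - exp (- s))) ^ m)"
  proof -
    have "0 \<le> 1 - p * (1 - exp (- s))"
      using p01 by (smt (verit) exp_gt_zero mult_left_le mult_nonneg_nonneg)
    then show ?thesis by (simp add: prod_ennreal ennreal_power)
  qed
  also have "ennreal (exp (s * a)) * \<dots> \<le> ennreal (exp (s * a - real m * p * (1 - exp (- s))))"
  proof -
    have h0: "0 \<le> 1 - p * (1 - exp (- s))"
      using p01 by (smt (verit) exp_gt_zero mult_left_le mult_nonneg_nonneg)
    have "(1 - p * (1 - exp (- s))) ^ m \<le> exp (- (p * (1 - exp (- s)))) ^ m"
      using h0 exp_ge_add_one_self[of "- (p * (1 - exp (- s)))"] by (intro power_mono) auto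
    also have "\<dots> = exp (real m * (- (p * (1 - exp (- s)))))" by (subst exp_of_nat_mult[symmetric]) simp
    finally have "exp (s * a) * (1 - p * (1 - exp (- s))) ^ m \<le> exp (s * a) * exp (real m * (- (p * (1 - exp (- s)))))"
      by (intro mult_left_mono) auto
    also have "\<dots> = exp (s * a - real m * p * (1 - exp (- s)))"
      by (simp add: exp_add[symmetric])
    finally have "exp (s * a) * (1 - p * (1 - exp (- s))) ^ m \<le> exp (s * a - real m * p * (1 - exp (- s)))" .
    then show ?thesis using h0 by (simp add: ennreal_mult[symmetric] ennreal_leI)
  qed
  finally have "emeasure X {x\<in>space X. K x \<le> a} \<le> ennreal (exp (s * a - real m * p * (1 - exp (- s))))" .
  then have "measure X {x\<in>space X. K x \<le> a} \<le> exp (s * a - real m * p * (1 - exp (- s)))"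
    by (simp add: X.emeasure_eq_measure)
  then show ?thesis unfolding X_def[symmetric] Keq .
qed

lemma sqrt_prod_aux: assumes "0 \<le> a" "0 < (m::real)" shows "sqrt (a * m) * sqrt (a / m) = a"
proof -
  have "sqrt (a * m) * sqrt (a / m) = sqrt (a * m * (a / m))" by (rule real_sqrt_mult[symmetric])
  also have "a * m * (a / m) = a ^ 2" using assms by (simp add: power2_eq_square)
  finally show ?thesis using assms by simp
qed

lemma real_bayes:
  fixes A0 d q \<eta> \<epsilon> m :: real
  assumes m: "0 < m" and A1: "A0 \<le> 1" and A0: "A0 > (1 - \<eta>) * d" and d: "0 < d"
    and \<eta>: "0 < \<eta>" "\<eta> < 1" and q: "\<bar>q\<bar> \<le> \<eta> * sqrt ((1 - \<eta>) * d * m)"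
    and e: "1 - \<epsilon> < (1 - \<eta>) * (1 - \<eta>)"
  shows "A0 - q * sqrt (A0 * (1 - A0) / m) > (1 - \<epsilon>) * d"
proof -
  have A0p: "0 < A0" using A0 d \<eta> by (smt (verit) mult_pos_pos)
  have "0 \<le> A0 * (1 - A0) / m" by (intro divide_nonneg_pos mult_nonneg_nonneg) (use A1 A0p m in auto)
  have "q * sqrt (A0 * (1 - A0) / m) \<le> \<bar>q\<bar> * sqrt (A0 * (1 - A0) / m)"
    using \<open>0 \<le> A0 * (1 - A0) / m\<close> by (intro mult_right_mono) auto
  also have "\<dots> \<le> \<bar>q\<bar> * sqrt (A0 / m)"
    using A1 A0p m \<open>0 \<le> A0 * (1 - A0) / m\<close> by (intro mult_left_mono real_sqrt_le_mono divide_right_mono)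
      (auto simp: mult_left_le intro!: divide_nonneg_pos mult_nonneg_nonneg)
  also have "\<dots> \<le> \<eta> * sqrt (A0 * m) * sqrt (A0 / m)"
  proof (intro mult_right_mono)
    have "sqrt ((1 - \<eta>) * d * m) \<le> sqrt (A0 * m)"
      using A0 m by (intro real_sqrt_le_mono mult_right_mono) auto
    then show "\<bar>q\<bar> \<le> \<eta> * sqrt (A0 * m)" using q \<eta> by (smt (verit) mult_left_mono)
  qed (use A0p m in auto)
  also have "\<dots> = \<eta> * A0" using sqrt_prod_aux[of A0 m] A0p m by simp
  finally have "A0 - q * sqrt (A0 * (1 - A0) / m) \<ge> (1 - \<eta>) * A0" by (simp add: algebra_simps)
  moreover have "(1 - \<eta>) * A0 > (1 - \<eta>) * ((1 - \<eta>) * d)" using A0 \<eta> by simp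
  moreover have "(1 - \<eta>) * ((1 - \<eta>) * d) > (1 - \<epsilon>) * d" using e d by simp
  ultimately show ?thesis by linarith
qed

lemma real_oracle:
  fixes A0 d q \<eta> \<epsilon> m :: real
  assumes m: "0 < m" and A0: "A0 > (1 - \<eta>) * d" and d: "0 < d" "d < 1"
    and \<eta>: "0 < \<eta>" "\<eta> < 1" and q: "\<bar>q\<bar> \<le> \<eta> * sqrt ((1 - \<eta>) * d * m)"
    and e: "1 - \<epsilon> < 1 - 2 * \<eta>"
  shows "A0 - q * sqrt (d * (1 - d) / m) > (1 - \<epsilon>) * d"
proof -
  have "0 \<le> d * (1 - d) / m" by (intro divide_nonneg_pos mult_nonneg_nonneg) (use d m in auto)
  have "q * sqrt (d * (1 - d) / m) \<le> \<bar>q\<bar> * sqrt (d * (1 - d) / m)"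
    using \<open>0 \<le> d * (1 - d) / m\<close> by (intro mult_right_mono) auto
  also have "\<dots> \<le> \<bar>q\<bar> * sqrt (d / m)"
    using d m \<open>0 \<le> d * (1 - d) / m\<close> by (intro mult_left_mono real_sqrt_le_mono divide_right_mono)
      (auto simp: mult_left_le intro!: divide_nonneg_pos mult_nonneg_nonneg)
  also have "\<dots> \<le> \<eta> * sqrt (d * m) * sqrt (d / m)"
  proof (intro mult_right_mono)
    have "sqrt ((1 - \<eta>) * d * m) \<le> sqrt (d * m)"
      using d m \<eta> by (intro real_sqrt_le_mono) (simp add: mult_left_le_one_le)
    then show "\<bar>q\<bar> \<le> \<eta> * sqrt (d * m)" using q \<eta> by (smt (verit) mult_left_mono)
  qed (use d m in auto)
  also have "\<dots> = \<eta> * d" using sqrt_prod_aux[of d m] d m by simp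
  finally show ?thesis using A0 e d by (smt (verit) mult_strict_right_mono left_diff_distrib)
qed

lemma perN:
  fixes Q C mu :: "'a measure" and f g :: "'a \<Rightarrow> real" and m n :: nat
  assumes Q: "prob_space Q" and C: "prob_space C" and sC: "sets C = sets Q"
    and dis: "disjoint_supports Q C" and d: "0 < d" "d < 1"
    and den: "densities (mixture d Q C) Q mu f g"
    and m: "0 < m" and n: "0 < n" and s: "0 < s" and \<eta>: "0 < \<eta>" "\<eta> < 1"
    and q: "\<bar>std_normal_quantile (1 - \<alpha>)\<bar> \<le> \<eta> * sqrt ((1 - \<eta>) * d * real m)"
    and e1: "1 - \<epsilon> < (1 - \<eta>) * (1 - \<eta>)" and e2: "1 - \<epsilon> < 1 - 2 * \<eta>"
  defines "S \<equiv> sample_space m n (mixture d Q C) Q"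
    and "bnd \<equiv> exp (s * ((1 - \<eta>) * real m * d) - real m * d * (1 - exp (- s)))"
  shows "measure S {\<omega>\<in>space S. lambda_bayes \<alpha> m n (rho_star f g) \<omega> > (1 - \<epsilon>) * d} \<ge> 1 - bnd"
    and "measure S {\<omega>\<in>space S. lambda_oracle \<alpha> m n (mixture d Q C) Q (rho_star f g) (1/2) \<omega>
            > (1 - \<epsilon>) * d} \<ge> 1 - bnd"
proof -
  interpret Q: prob_space Q by fact
  interpret C: prob_space C by fact
  define P where "P = mixture d Q C"
  have P: "prob_space P" unfolding P_def using mixture_prob[OF Q C sC] d by simp
  interpret P: prob_space P by fact
  have sP: "sets P = sets Q" and spP: "space P = space Q"
    unfolding P_def by (simp_all add: mixture_sets mixture_space)
  note rf = rho_facts[OF Q C sC dis d den]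
  define \<rho> where "\<rho> = rho_star f g"
  have rQ[measurable]: "\<rho> \<in> borel_measurable Q" using rf(1) unfolding \<rho>_def .
  have rP[measurable]: "\<rho> \<in> borel_measurable P" using rQ measurable_cong_sets[OF sP refl] by blast
  have QL: "measure Q {x\<in>space Q. \<rho> x \<le> 1/2} = 0" using rf(2) unfolding \<rho>_def .
  have PL: "measure P {x\<in>space P. \<rho> x \<le> 1/2} = d" using rf(3) unfolding \<rho>_def P_def spP[unfolded P_def] .
  define X where "X = PiM {..<m} (\<lambda>_. P)"
  define Y where "Y = PiM {..<n} (\<lambda>_. Q)"
  have X: "prob_space X" unfolding X_def by (rule prob_space_PiM) (rule P)
  interpret X: prob_space X by fact
  have Y: "prob_space Y" unfolding Y_def by (rule prob_space_PiM) (rule Q)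
  interpret Y: prob_space Y by fact
  interpret XY: pair_prob_space X Y by unfold_locales
  have S_eq: "S = X \<Otimes>\<^sub>M Y" unfolding S_def sample_space_def X_def Y_def P_def ..
  have spS: "space S = space X \<times> space Y" unfolding S_eq by (simp add: space_pair_measure)
  define a where "a = (1 - \<eta>) * real m * d"
  define H where "H = {x\<in>space X. \<not> real (card {i\<in>{..<m}. \<rho> (x i) \<le> 1/2}) \<le> a}"
  define G where "G = {y\<in>space Y. \<forall>j<n. \<rho> (y j) > 1/2}"
  have Hm: "H \<in> sets X" unfolding H_def card_as_sum X_def by measurable
  have Gm: "G \<in> sets Y"
  proof -
    have "G = {y\<in>space Y. \<forall>j\<in>{..<n}. \<rho> (y j) > 1/2}" unfolding G_def by auto
    also have "\<dots> \<in> sets Y" unfolding Y_def by measurable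
    finally show ?thesis .
  qed
  have HX: "measure X H \<ge> 1 - bnd"
  proof -
    define Lx where "Lx = {x\<in>space X. real (card {i\<in>{..<m}. \<rho> (x i) \<le> 1/2}) \<le> a}"
    have Hc: "H = space X - Lx"
      unfolding H_def Lx_def by auto
    have Lxm: "Lx \<in> sets X"
      unfolding Lx_def card_as_sum X_def by measurable
    have cb: "measure X Lx \<le> bnd"
      using chernoff_prod[OF P rP PL s, of m a] unfolding X_def[symmetric] Lx_def[symmetric]
      by (simp add: bnd_def a_def)
    have "measure X H = 1 - measure X Lx" unfolding Hc by (rule X.prob_compl[OF Lxm])
    then show ?thesis using cb by linarith
  qed
  have GY: "measure Y G = 1"
  proof -
    interpret PQ: product_prob_space "\<lambda>_. Q" by (rule product_prob_spaceI) (rule Q)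
    have Gq: "{y\<in>space Q. \<rho> y > 1/2} \<in> sets Q" by measurable
    have "G = PiE {..<n} (\<lambda>_. {y\<in>space Q. \<rho> y > 1/2})"
    proof (rule set_eqI)
      fix y
      show "y \<in> G \<longleftrightarrow> y \<in> PiE {..<n} (\<lambda>_. {y\<in>space Q. \<rho> y > 1/2})"
        unfolding G_def Y_def space_PiM PiE_iff by blast
    qed
    then have "emeasure Y G = (\<Prod>i\<in>{..<n}. emeasure Q {y\<in>space Q. \<rho> y > 1/2})"
      unfolding Y_def using Gq by (simp add: PQ.emeasure_PiM)
    moreover have "measure Q {y\<in>space Q. \<rho> y > 1/2} = 1"
    proof -
      have "{y\<in>space Q. \<rho> y > 1/2} = space Q - {x\<in>space Q. \<rho> x \<le> 1/2}" by auto
      moreover have "{x\<in>space Q. \<rho> x \<le> 1/2} \<in> sets Q" by measurable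
      ultimately show ?thesis using Q.prob_compl QL by simp
    qed
    ultimately have "emeasure Y G = 1" by (simp add: Q.emeasure_eq_measure)
    then show ?thesis by (simp add: Y.emeasure_eq_measure)
  qed
  have HG: "measure S (H \<times> G) \<ge> 1 - bnd"
  proof -
    have "emeasure S (H \<times> G) = emeasure X H * emeasure Y G"
      unfolding S_eq by (rule Y.emeasure_pair_measure_Times[OF Hm Gm])
    then have "measure S (H \<times> G) = measure X H * measure Y G"
      unfolding measure_def by (simp only: enn2real_mult)
    then show ?thesis using HX GY by simp
  qed
  have "H \<subseteq> space X" unfolding H_def by blast
  moreover have "G \<subseteq> space Y" unfolding G_def by blast
  ultimately have HGsub: "H \<times> G \<subseteq> space S" unfolding spS by blast
  have key: "\<And>x y. x \<in> H \<Longrightarrow> y \<in> G \<Longrightarrow>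
      real (card {i\<in>{..<m}. \<rho> (x i) \<le> 1/2}) / real m > (1 - \<eta>) * d
      \<and> real (card {i\<in>{..<m}. \<rho> (x i) \<le> 1/2}) / real m \<le> 1
      \<and> {j\<in>{..<n}. \<rho> (y j) > 1/2} = {..<n} \<and> {j\<in>{..<n}. \<rho> (y j) \<le> 1/2} = {}"
  proof -
    fix x y assume xH: "x \<in> H" and yG: "y \<in> G"
    have "real (card {i\<in>{..<m}. \<rho> (x i) \<le> 1/2}) > a" using xH unfolding H_def by auto
    then have c1: "real (card {i\<in>{..<m}. \<rho> (x i) \<le> 1/2}) / real m > (1 - \<eta>) * d"
      using m unfolding a_def by (simp add: pos_less_divide_eq mult.commute mult.left_commute)
    have "card {i\<in>{..<m}. \<rho> (x i) \<le> 1/2} \<le> m"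
      using card_mono[of "{..<m}" "{i\<in>{..<m}. \<rho> (x i) \<le> 1/2}"] by auto
    then have c2: "real (card {i\<in>{..<m}. \<rho> (x i) \<le> 1/2}) / real m \<le> 1" using m by simp
    show "?thesis x y" using c1 c2 yG unfolding G_def by auto
  qed
  let ?q = "std_normal_quantile (1 - \<alpha>)"
  show "measure S {\<omega>\<in>space S. lambda_bayes \<alpha> m n (rho_star f g) \<omega> > (1 - \<epsilon>) * d} \<ge> 1 - bnd"
  proof -
    have Em: "{\<omega>\<in>space S. lambda_bayes \<alpha> m n (rho_star f g) \<omega> > (1 - \<epsilon>) * d} \<in> sets S"
      unfolding S_eq X_def Y_def lambda_bayes_def Let_def card_as_sum \<rho>_def[symmetric] by measurable
    have "H \<times> G \<subseteq> {\<omega>\<in>space S. lambda_bayes \<alpha> m n (rho_star f g) \<omega> > (1 - \<epsilon>) * d}"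
    proof (safe)
      fix x y assume xH: "x \<in> H" and yG: "y \<in> G"
      then show "(x, y) \<in> space S" using HGsub by auto
      note k = key[OF xH yG]
      define A0 where "A0 = real (card {i\<in>{..<m}. \<rho> (x i) \<le> 1/2}) / real m"
      have "lambda_bayes \<alpha> m n \<rho> (x, y) = A0 - ?q * sqrt (A0 * (1 - A0) / real m)"
        unfolding lambda_bayes_def Let_def A0_def using k n by simp
      moreover have "A0 - ?q * sqrt (A0 * (1 - A0) / real m) > (1 - \<epsilon>) * d"
        using real_bayes[of "real m" A0 \<eta> d ?q \<epsilon>] m k d \<eta> q e1 unfolding A0_def by simp
      ultimately show "(1 - \<epsilon>) * d < lambda_bayes \<alpha> m n (rho_star f g) (x, y)"
        unfolding \<rho>_def by simp
    qed
    then have "measure S (H \<times> G) \<le> measure S {\<omega>\<in>space S. lambda_bayes \<alpha> m n (rho_star f g) \<omega> > (1 - \<epsilon>) * d}"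
      using Em by (intro finite_measure.finite_measure_mono) (auto simp: S_eq intro: XY.finite_measure_axioms)
    then show ?thesis using HG by simp
  qed
  show "measure S {\<omega>\<in>space S. lambda_oracle \<alpha> m n (mixture d Q C) Q (rho_star f g) (1/2) \<omega>
            > (1 - \<epsilon>) * d} \<ge> 1 - bnd"
  proof -
    have Em: "{\<omega>\<in>space S. lambda_oracle \<alpha> m n (mixture d Q C) Q (rho_star f g) (1/2) \<omega> > (1 - \<epsilon>) * d} \<in> sets S"
      unfolding S_eq X_def Y_def lambda_oracle_def Let_def emp_cdf_def card_as_sum \<rho>_def[symmetric] by measurable
    have "H \<times> G \<subseteq> {\<omega>\<in>space S. lambda_oracle \<alpha> m n (mixture d Q C) Q (rho_star f g) (1/2) \<omega> > (1 - \<epsilon>) * d}"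
    proof (safe)
      fix x y assume xH: "x \<in> H" and yG: "y \<in> G"
      then show "(x, y) \<in> space S" using HGsub by auto
      note k = key[OF xH yG]
      define A0 where "A0 = real (card {i\<in>{..<m}. \<rho> (x i) \<le> 1/2}) / real m"
      have "lambda_oracle \<alpha> m n P Q \<rho> (1/2) (x, y) = A0 - ?q * sqrt (d * (1 - d) / real m)"
        unfolding lambda_oracle_def Let_def A0_def emp_cdf_def using k n PL QL by simp
      moreover have "A0 - ?q * sqrt (d * (1 - d) / real m) > (1 - \<epsilon>) * d"
        using real_oracle[of "real m" \<eta> d A0 ?q \<epsilon>] m k d \<eta> q e2 unfolding A0_def by simp
      ultimately show "(1 - \<epsilon>) * d < lambda_oracle \<alpha> m n (mixture d Q C) Q (rho_star f g) (1/2) (x, y)"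
        unfolding \<rho>_def P_def by simp
    qed
    then have "measure S (H \<times> G) \<le> measure S {\<omega>\<in>space S. lambda_oracle \<alpha> m n (mixture d Q C) Q (rho_star f g) (1/2) \<omega> > (1 - \<epsilon>) * d}"
      using Em by (intro finite_measure.finite_measure_mono) (auto simp: S_eq intro: XY.finite_measure_axioms)
    then show ?thesis using HG by simp
  qed
qed

lemma exists_s:
  fixes \<eta> :: real assumes "0 < \<eta>"
  shows "\<exists>s>0. 1 - exp (- s) - s * (1 - \<eta>) > 0"
proof -
  have lim: "((\<lambda>s. (1 - exp (- s)) / s) \<longlongrightarrow> 1) (at_right (0::real))" by real_asymp
  have "eventually (\<lambda>s. (1 - exp (- s)) / s > 1 - \<eta>) (at_right (0::real))"
    using order_tendstoD(1)[OF lim] assms by simp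
  then obtain b where b: "b > 0" "\<And>y. y > 0 \<Longrightarrow> y < b \<Longrightarrow> (1 - exp (- y)) / y > 1 - \<eta>"
    unfolding eventually_at_right[OF zero_less_one] by auto
  define s where "s = b / 2"
  have s: "s > 0" "s < b" using b unfolding s_def by auto
  have "(1 - exp (- s)) / s > 1 - \<eta>" using b(2) s by auto
  then have "1 - exp (- s) > s * (1 - \<eta>)" using s by (simp add: less_divide_eq mult.commute)
  then show ?thesis using s by (intro exI[of _ s]) auto
qed

lemma md_top:
  fixes m :: "nat \<Rightarrow> nat"
  assumes ms: "model_seq \<gamma> \<delta>" and g: "-1 < \<gamma>"
    and mpi: "(\<lambda>N. real (m N) / real N) \<longlonglongrightarrow> \<pi>" and pi: "0 < \<pi>"
  shows "filterlim (\<lambda>N. real (m N) * \<delta> N) at_top sequentially"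
proof -
  have dpos: "\<And>N. 0 < \<delta> N" using ms unfolding model_seq_def by auto
  have "\<delta> \<in> \<Omega>(\<lambda>N. real N powr \<gamma>)" using ms unfolding model_seq_def by auto
  then obtain c where c: "c > 0" "eventually (\<lambda>N. norm (\<delta> N) \<ge> c * norm (real N powr \<gamma>)) sequentially"
    unfolding bigomega_def by auto
  have e2: "eventually (\<lambda>N. real (m N) / real N > \<pi> / 2) sequentially"
    by (rule order_tendstoD(1)[OF mpi]) (use pi in simp)
  have e3: "eventually (\<lambda>N. N \<ge> (1::nat)) sequentially" by (rule eventually_ge_at_top)
  have lim: "filterlim (\<lambda>N. (\<pi> / 2 * c) * real N powr (1 + \<gamma>)) at_top sequentially"
  proof (rule filterlim_tendsto_pos_mult_at_top[OF tendsto_const])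
    show "0 < \<pi> / 2 * c" using pi c by simp
    show "filterlim (\<lambda>N. real N powr (1 + \<gamma>)) at_top sequentially"
      by (rule filterlim_compose[OF real_powr_at_top filterlim_real_sequentially]) (use g in simp)
  qed
  have "eventually (\<lambda>N. (\<pi> / 2 * c) * real N powr (1 + \<gamma>) \<le> real (m N) * \<delta> N) sequentially"
    using c(2) e2 e3
  proof eventually_elim
    case (elim N)
    have Np: "real N > 0" using elim by simp
    have d1: "\<delta> N \<ge> c * real N powr \<gamma>" using elim(1) dpos[of N] by simp
    have "(\<pi> / 2 * c) * real N powr (1 + \<gamma>) = (\<pi> / 2) * (real N * (c * real N powr \<gamma>))"
      using Np by (simp add: powr_add algebra_simps)
    also have "\<dots> \<le> (real (m N) / real N) * (real N * \<delta> N)"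
      using elim(2) d1 Np pi c by (intro mult_mono) auto
    also have "\<dots> = real (m N) * \<delta> N" using Np by simp
    finally show ?case .
  qed
  then show ?thesis by (rule filterlim_at_top_mono[OF lim])
qed

lemma sandwich_exp:
  fixes u g :: "nat \<Rightarrow> real"
  assumes g: "filterlim g at_top sequentially" and c: "c > 0"
    and ev: "eventually (\<lambda>N. 1 - exp (- c * g N) \<le> u N \<and> u N \<le> 1) sequentially"
  shows "u \<longlonglongrightarrow> 1"
proof -
  have "filterlim (\<lambda>N. (- c) * g N) at_bot sequentially"
    by (rule filterlim_tendsto_neg_mult_at_bot[OF tendsto_const _ g]) (use c in simp)
  then have "(\<lambda>N. exp ((- c) * g N)) \<longlonglongrightarrow> 0"
    by (rule filterlim_compose[OF exp_at_bot])
  then have l: "(\<lambda>N. 1 - exp (- c * g N)) \<longlonglongrightarrow> 1 - 0"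
    by (intro tendsto_diff tendsto_const) simp
  show ?thesis
    by (rule tendsto_sandwich[OF _ _ l[simplified] tendsto_const]) (use ev in \<open>auto elim: eventually_mono\<close>)
qed

lemma gamma_lower_eq:
  assumes "\<And>\<gamma>. -1 < \<gamma> \<Longrightarrow> \<gamma> < 0 \<Longrightarrow> good \<gamma>"
  shows "gamma_lower good = -1"
  unfolding gamma_lower_def by (rule cInf_eq_minimum) (use assms in auto)

theorem proposition4:
  fixes m n :: "nat \<Rightarrow> nat" and \<pi> \<alpha> \<epsilon> :: real
    and Q C :: "'a measure"
  assumes "\<And>N. N \<ge> 2 \<Longrightarrow> m N + n N = N \<and> 0 < m N \<and> m N \<le> n N"
    and "(\<lambda>N. real (m N) / real N) \<longlonglongrightarrow> \<pi>" and "0 < \<pi>" and "\<pi> < 1"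
    and "0 < \<alpha>" and "\<alpha> < 1"
    and "prob_space Q" and "prob_space C" and "sets C = sets Q"
    and "disjoint_supports Q C"
    and "0 < \<epsilon>" and "\<epsilon> \<le> 1"
  shows "gamma_lower (bayes_good \<alpha> m n Q C \<epsilon>) = -1
       \<and> gamma_lower (oracle_good \<alpha> m n Q C \<epsilon>) = -1"
proof -
  note mn = assms(1) and mpi = assms(2) and pi = assms(3)
  note Q = assms(7) and C = assms(8) and sC = assms(9) and dis = assms(10)
  define \<eta> where "\<eta> = \<epsilon> / 3"
  have \<eta>: "0 < \<eta>" "\<eta> < 1" using assms(11,12) unfolding \<eta>_def by auto
  have e1: "1 - \<epsilon> < (1 - \<eta>) * (1 - \<eta>)"
  proof -
    have "(1 - \<eta>) * (1 - \<eta>) = 1 - 2 * \<eta> + \<eta> * \<eta>" by (simp add: algebra_simps)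
    moreover have "\<eta> * \<eta> > 0" using \<eta> by simp
    moreover have "\<epsilon> = 3 * \<eta>" unfolding \<eta>_def by simp
    ultimately show ?thesis using \<eta> by linarith
  qed
  have e2: "1 - \<epsilon> < 1 - 2 * \<eta>" using assms(11) unfolding \<eta>_def by simp
  obtain s where s: "s > 0" and cpos: "1 - exp (- s) - s * (1 - \<eta>) > 0"
    using exists_s[OF \<eta>(1)] by blast
  define c where "c = 1 - exp (- s) - s * (1 - \<eta>)"
  have c: "c > 0" using cpos unfolding c_def .
  let ?q = "std_normal_quantile (1 - \<alpha>)"
  have core: "filterlim (\<lambda>N. real (m N) * \<delta> N) at_top sequentially
      \<and> eventually (\<lambda>N. 
          (1 - exp (- c * (real (m N) * \<delta> N)) \<le> (let S = sample_space (m N) (n N) (mixture (\<delta> N) Q C) Q in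
             measure S {\<omega>\<in>space S. lambda_bayes \<alpha> (m N) (n N) (rho_star (f N) (g N)) \<omega> > (1 - \<epsilon>) * \<delta> N})
          \<and> (let S = sample_space (m N) (n N) (mixture (\<delta> N) Q C) Q in
             measure S {\<omega>\<in>space S. lambda_bayes \<alpha> (m N) (n N) (rho_star (f N) (g N)) \<omega> > (1 - \<epsilon>) * \<delta> N}) \<le> 1)
        \<and> (1 - exp (- c * (real (m N) * \<delta> N)) \<le> (let S = sample_space (m N) (n N) (mixture (\<delta> N) Q C) Q in
             measure S {\<omega>\<in>space S. lambda_oracle \<alpha> (m N) (n N) (mixture (\<delta> N) Q C) Q
                 (rho_star (f N) (g N)) (1/2) \<omega> > (1 - \<epsilon>) * \<delta> N})
          \<and> (let S = sample_space (m N) (n N) (mixture (\<delta> N) Q C) Q in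
             measure S {\<omega>\<in>space S. lambda_oracle \<alpha> (m N) (n N) (mixture (\<delta> N) Q C) Q
                 (rho_star (f N) (g N)) (1/2) \<omega> > (1 - \<epsilon>) * \<delta> N}) \<le> 1)) sequentially"
    (is "_ \<and> eventually ?P _")
    if g: "-1 < \<gamma>" and ms: "model_seq \<gamma> \<delta>"
      and den: "\<forall>N. densities (mixture (\<delta> N) Q C) Q (mu N) (f N) (g N)"
    for \<gamma> \<delta> mu f g
  proof
    have d: "\<And>N. 0 < \<delta> N \<and> \<delta> N < 1" using ms unfolding model_seq_def by auto
    have top: "filterlim (\<lambda>N. real (m N) * \<delta> N) at_top sequentially"
      by (rule md_top[OF ms g mpi pi])
    then show "filterlim (\<lambda>N. real (m N) * \<delta> N) at_top sequentially" .
    define K where "K = (\<bar>?q\<bar> / \<eta>)\<^sup>2 / (1 - \<eta>)"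
    have eK: "eventually (\<lambda>N. K \<le> real (m N) * \<delta> N) sequentially"
      using top unfolding filterlim_at_top by auto
    have e2N: "eventually (\<lambda>N. N \<ge> (2::nat)) sequentially" by (rule eventually_ge_at_top)
    show "eventually ?P sequentially"
      using eK e2N
    proof eventually_elim
      case (elim N)
      have mN: "0 < m N" and nN: "0 < n N" using mn[OF elim(2)] by auto
      have qb: "\<bar>?q\<bar> \<le> \<eta> * sqrt ((1 - \<eta>) * \<delta> N * real (m N))"
      proof -
        have "(\<bar>?q\<bar> / \<eta>)\<^sup>2 \<le> (1 - \<eta>) * (real (m N) * \<delta> N)"
          using elim(1) \<eta> unfolding K_def by (simp add: divide_le_eq mult.commute)
        then have "(\<bar>?q\<bar> / \<eta>)\<^sup>2 \<le> (1 - \<eta>) * \<delta> N * real (m N)"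
          by (simp add: algebra_simps)
        then have "\<bar>?q\<bar> / \<eta> \<le> sqrt ((1 - \<eta>) * \<delta> N * real (m N))" by (rule real_le_rsqrt)
        then show ?thesis using \<eta> by (simp add: divide_le_eq mult.commute)
      qed
      have bnd: "exp (s * ((1 - \<eta>) * real (m N) * \<delta> N) - real (m N) * \<delta> N * (1 - exp (- s)))
          = exp (- c * (real (m N) * \<delta> N))"
        unfolding c_def by (simp add: algebra_simps)
      note pn = perN[OF Q C sC dis conjunct1[OF d[of N]] conjunct2[OF d[of N]] den[rule_format, of N]
          mN nN s \<eta> qb e1 e2]
      have PS: "prob_space (sample_space (m N) (n N) (mixture (\<delta> N) Q C) Q)"
        unfolding sample_space_def
        by (intro prob_space_pair prob_space_PiM mixture_prob[OF Q C sC] Q) (use d[of N] in auto)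
      show ?case
        using pn bnd prob_space.prob_le_1[OF PS] unfolding Let_def by auto
    qed
  qed
  show ?thesis
  proof
    show "gamma_lower (bayes_good \<alpha> m n Q C \<epsilon>) = -1"
    proof (rule gamma_lower_eq)
      fix \<gamma> :: real assume g: "-1 < \<gamma>" "\<gamma> < 0"
      show "bayes_good \<alpha> m n Q C \<epsilon> \<gamma>"
        unfolding bayes_good_def
      proof (intro allI impI)
        fix \<delta> mu f g assume ms: "model_seq \<gamma> \<delta>"
          and den: "\<forall>N. densities (mixture (\<delta> N) Q C) Q (mu N) (f N) (g N)"
        note cr = core[OF g(1) ms den]
        show "(\<lambda>N. let S = sample_space (m N) (n N) (mixture (\<delta> N) Q C) Q in
           measure S {\<omega>\<in>space S. lambda_bayes \<alpha> (m N) (n N) (rho_star (f N) (g N)) \<omega>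
                                   > (1 - \<epsilon>) * \<delta> N}) \<longlonglongrightarrow> 1"
          by (rule sandwich_exp[OF conjunct1[OF cr] c]) (use conjunct2[OF cr] in \<open>auto elim: eventually_mono\<close>)
      qed
    qed
    show "gamma_lower (oracle_good \<alpha> m n Q C \<epsilon>) = -1"
    proof (rule gamma_lower_eq)
      fix \<gamma> :: real assume g: "-1 < \<gamma>" "\<gamma> < 0"
      show "oracle_good \<alpha> m n Q C \<epsilon> \<gamma>"
        unfolding oracle_good_def
      proof (intro allI impI)
        fix \<delta> mu f g assume ms: "model_seq \<gamma> \<delta>"
          and den: "\<forall>N. densities (mixture (\<delta> N) Q C) Q (mu N) (f N) (g N)"
        note cr = core[OF g(1) ms den]
        show "\<exists>t::nat \<Rightarrow> real. (\<forall>N. 0 \<le> t N \<and> t N \<le> 1) \<and>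
          (\<lambda>N. let S = sample_space (m N) (n N) (mixture (\<delta> N) Q C) Q in
             measure S {\<omega>\<in>space S.
               lambda_oracle \<alpha> (m N) (n N) (mixture (\<delta> N) Q C) Q
                 (rho_star (f N) (g N)) (t N) \<omega> > (1 - \<epsilon>) * \<delta> N}) \<longlonglongrightarrow> 1"
        proof (intro exI[of _ "\<lambda>_. 1/2"] conjI)
          show "\<forall>N. 0 \<le> (1/2::real) \<and> (1/2::real) \<le> 1" by simp
          show "(\<lambda>N. let S = sample_space (m N) (n N) (mixture (\<delta> N) Q C) Q in
             measure S {\<omega>\<in>space S.
               lambda_oracle \<alpha> (m N) (n N) (mixture (\<delta> N) Q C) Q
                 (rho_star (f N) (g N)) (1/2) \<omega> > (1 - \<epsilon>) * \<delta> N}) \<longlonglongrightarrow> 1"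
            by (rule sandwich_exp[OF conjunct1[OF cr] c]) (use conjunct2[OF cr] in \<open>auto elim: eventually_mono\<close>)
        qed
      qed
    qed
  qed
qed

end
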